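(* Let $M=(E,\Delta)$ be a matroid of rank $r$ and let $M\times e$ denote its free coextension by a new element $e\notin E$. Then $$(-1)^{r+1}\chi_{M\times e}(-q)=(1+q)\,f_M(q).$$
   Context: For a matroid $M=(E,\Delta)$ of rank $r$ with rank function $\mathrm{rk}$: - The characteristic polynomial is $\chi_M(q)=\sum_{A\subseteq E}(-1)^{|A|}q^{r-\mathrm{rk}(A)}$. - The $f$-polynomial is $f_M(q)=\sum_{A\in\Delta}q^{r-|A|}=\sum_{i=0}^r f_iq^{r-i}$, where $f_i$ is the number of independent sets of size $i$. - The free extension of $M$ by $e\notin E$ is the matroid $M+e$ on $E\cup\{e\}$ whose independent sets are $\Delta\cup\{I\cup\{e\}: I\in\Delta,\ |I|\le r-1\}$. - The dual matroid $M^*$ on $E$ has as independent sets those $A\subseteq E$ with $\mathrm{rk}(E\setminus A)=r$. - The free coextension is $M\times e:=(M^*+e)^*$; it has rank $r+1$. *)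

theory Defs
  imports "HOL-Computational_Algebra.Polynomial"
begin

definition matroid :: "'a set \<Rightarrow> 'a set set \<Rightarrow> bool" where
  "matroid E I \<longleftrightarrow> finite E \<and> I \<subseteq> Pow E \<and> {} \<in> I
     \<and> (\<forall>X Y. X \<in> I \<and> Y \<subseteq> X \<longrightarrow> Y \<in> I)
     \<and> (\<forall>X Y. X \<in> I \<and> Y \<in> I \<and> card X < card Y \<longrightarrow> (\<exists>y\<in>Y - X. insert y X \<in> I))"

definition rk :: "'a set set \<Rightarrow> 'a set \<Rightarrow> nat" where
  "rk I A = Max (card ` {X \<in> I. X \<subseteq> A})"

definition mrank :: "'a set \<Rightarrow> 'a set set \<Rightarrow> nat" where
  "mrank E I = rk I E"

definition dual_indep :: "'a set \<Rightarrow> 'a set set \<Rightarrow> 'a set set" where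
  "dual_indep E I = {A. A \<subseteq> E \<and> rk I (E - A) = mrank E I}"

text \<open>Independent sets of the free extension (on ground set insert e E).
  The condition card X \<le> r - 1 is written card X < r to avoid truncated subtraction.\<close>
definition free_ext_indep :: "'a set \<Rightarrow> 'a set set \<Rightarrow> 'a \<Rightarrow> 'a set set" where
  "free_ext_indep E I e = I \<union> {insert e X | X. X \<in> I \<and> card X < mrank E I}"

text \<open>Independent sets of the free coextension M x e = (M* + e)*, on ground set insert e E.\<close>
definition free_coext_indep :: "'a set \<Rightarrow> 'a set set \<Rightarrow> 'a \<Rightarrow> 'a set set" where
  "free_coext_indep E I e = dual_indep (insert e E) (free_ext_indep E (dual_indep E I) e)"

definition char_poly :: "'a set \<Rightarrow> 'a set set \<Rightarrow> int poly" where
  "char_poly E I = (\<Sum>A\<in>Pow E. smult ((-1) ^ card A) (monom 1 (mrank E I - rk I A)))"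

definition f_poly :: "'a set \<Rightarrow> 'a set set \<Rightarrow> int poly" where
  "f_poly E I = (\<Sum>A\<in>I. monom 1 (mrank E I - card A))"

end

theory Submission
  imports Defs
begin


lemma rk_ub_gen: "finite J \<Longrightarrow> X \<in> J \<Longrightarrow> X \<subseteq> A \<Longrightarrow> card X \<le> rk J A"
  unfolding rk_def by (intro Max_ge) auto

lemma rk_ex_gen: "finite J \<Longrightarrow> {} \<in> J \<Longrightarrow> \<exists>X\<in>J. X \<subseteq> A \<and> card X = rk J A"
proof -
  assume "finite J" "{} \<in> J"
  hence "rk J A \<in> card ` {X\<in>J. X\<subseteq>A}" unfolding rk_def by (intro Max_in) auto
  thus ?thesis by auto
qed

lemma rk_le_gen: "finite J \<Longrightarrow> {} \<in> J \<Longrightarrow> (\<And>X. X \<in> J \<Longrightarrow> X \<subseteq> A \<Longrightarrow> card X \<le> k) \<Longrightarrow> rk J A \<le> k"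
  using rk_ex_gen by metis

lemma rk_mono_gen: "finite J \<Longrightarrow> {} \<in> J \<Longrightarrow> A \<subseteq> B \<Longrightarrow> rk J A \<le> rk J B"
proof -
  assume a: "finite J" "{} \<in> J" "A \<subseteq> B"
  then obtain X where "X \<in> J" "X \<subseteq> A" "card X = rk J A" using rk_ex_gen by metis
  thus ?thesis using rk_ub_gen[OF a(1), of X B] a(3) by auto
qed

context fixes E :: "'a set" and I assumes M: "matroid E I" begin

lemma finE: "finite E" using M by (simp add: matroid_def)
lemma IPow: "I \<subseteq> Pow E" using M by (simp add: matroid_def)
lemma finI: "finite I" using finE IPow by (meson finite_Pow_iff finite_subset)
lemma empI: "{} \<in> I" using M by (simp add: matroid_def)
lemma downI: "X \<in> I \<Longrightarrow> Y \<subseteq> X \<Longrightarrow> Y \<in> I" using M unfolding matroid_def by blast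
lemma augI: "X \<in> I \<Longrightarrow> Y \<in> I \<Longrightarrow> card X < card Y \<Longrightarrow> \<exists>y\<in>Y-X. insert y X \<in> I"
  using M unfolding matroid_def by blast
lemma finX: "X \<in> I \<Longrightarrow> finite X" using IPow finE by (meson PowD finite_subset subsetD)

lemma rk_ub: "X \<in> I \<Longrightarrow> X \<subseteq> A \<Longrightarrow> card X \<le> rk I A"
  using rk_ub_gen finI by blast
lemma rk_ex: "\<exists>X\<in>I. X \<subseteq> A \<and> card X = rk I A"
  using rk_ex_gen finI empI by blast
lemma rk_mono: "A \<subseteq> B \<Longrightarrow> rk I A \<le> rk I B"
  using rk_mono_gen finI empI by blast
lemma rk_card: "finite A \<Longrightarrow> rk I A \<le> card A"
  by (metis card_mono rk_ex)
lemma indep_rk: "X \<in> I \<Longrightarrow> rk I X = card X"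
  by (meson dual_order.eq_iff finX order_refl rk_card rk_ub)
lemma rk_eq_card_indep: "finite A \<Longrightarrow> rk I A = card A \<Longrightarrow> A \<in> I"
  by (metis card_subset_eq rk_ex)

lemma augment: "X \<in> I \<Longrightarrow> X \<subseteq> Y \<Longrightarrow> \<exists>B\<in>I. X \<subseteq> B \<and> B \<subseteq> Y \<and> card B = rk I Y"
proof (induction "rk I Y - card X" arbitrary: X rule: less_induct)
  case less
  show ?case
  proof (cases "card X = rk I Y")
    case True thus ?thesis using less.prems by blast
  next
    case False
    with rk_ub[OF less.prems] have lt: "card X < rk I Y" by simp
    obtain Z where Z: "Z \<in> I" "Z \<subseteq> Y" "card Z = rk I Y" using rk_ex by blast
    obtain y where y: "y \<in> Z - X" "insert y X \<in> I" using augI[OF less.prems(1) Z(1)] lt Z(3) by auto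
    have c: "card (insert y X) = card X + 1" using y finX less.prems by simp
    have "rk I Y - card (insert y X) < rk I Y - card X" using c lt by simp
    from less.hyps[OF this y(2)] y Z(2) less.prems obtain B where
      "B \<in> I" "insert y X \<subseteq> B" "B \<subseteq> Y" "card B = rk I Y" by auto
    thus ?thesis by blast
  qed
qed

lemma D_sub: "dual_indep E I \<subseteq> Pow E" by (auto simp: dual_indep_def)
lemma finD: "finite (dual_indep E I)" using D_sub finE by (meson finite_Pow_iff finite_subset)
lemma empD: "{} \<in> dual_indep E I" by (simp add: dual_indep_def mrank_def)

lemma dual_rank:
  assumes A: "A \<subseteq> E"
  shows "rk (dual_indep E I) (E - A) + card A + rk I E = card E + rk I A"
proof -
  let ?D = "dual_indep E I"
  have ceA: "card (E - A) + card A = card E"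
    using card_Int_Diff[OF finE, of A] A by (simp add: Int_absorb1)
  have "rk ?D (E - A) + card A + rk I E \<ge> card E + rk I A"
  proof -
    obtain BA where BA: "BA \<in> I" "BA \<subseteq> A" "card BA = rk I A" using rk_ex by blast
    have "BA \<subseteq> E" using BA(2) A by auto
    then obtain B where B: "B \<in> I" "BA \<subseteq> B" "B \<subseteq> E" "card B = rk I E"
      using augment[OF BA(1)] by blast
    define X where "X = (E - A) - B"
    have "B \<subseteq> E - X" using B(3) unfolding X_def by auto
    hence "rk I (E - X) \<ge> card B" using rk_ub[OF B(1)] by simp
    moreover have "rk I (E - X) \<le> rk I E" by (rule rk_mono) auto
    ultimately have XD: "X \<in> ?D" unfolding dual_indep_def mrank_def X_def using B(4) by auto
    have "X \<subseteq> E - A" unfolding X_def by auto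
    hence c1: "card X \<le> rk ?D (E - A)" using rk_ub_gen[OF finD XD] by simp
    have finB: "finite B" using finX B(1) by blast
    have "card (B \<inter> A) \<le> rk I A" using rk_ub[OF downI[OF B(1)], of "B \<inter> A" A] by simp
    moreover have "card BA \<le> card (B \<inter> A)" using BA B finB by (intro card_mono) auto
    ultimately have BAc: "card (B \<inter> A) = rk I A" using BA(3) by simp
    have "E - A = X \<union> (B - A)" using B(3) unfolding X_def by auto
    moreover have "X \<inter> (B - A) = {}" unfolding X_def by auto
    ultimately have c2: "card X + card (B - A) = card (E - A)"
      using finE by (metis card_Un_disjoint finite_Diff finite_Un)
    have c3: "card B = card (B \<inter> A) + card (B - A)" using card_Int_Diff[OF finB] .
    show ?thesis using c1 c2 c3 BAc B(4) ceA by linarith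
  qed
  moreover have "rk ?D (E - A) + card A + rk I E \<le> card E + rk I A"
  proof -
    obtain X where X: "X \<in> ?D" "X \<subseteq> E - A" "card X = rk ?D (E - A)"
      using rk_ex_gen[OF finD empD] by blast
    have "rk I (E - X) = rk I E" using X(1) by (simp add: dual_indep_def mrank_def)
    then obtain B where B: "B \<in> I" "B \<subseteq> E - X" "card B = rk I E" using rk_ex by metis
    have finB: "finite B" using finX B(1) by blast
    have c1: "card (B \<inter> A) \<le> rk I A" using rk_ub[OF downI[OF B(1)], of "B \<inter> A" A] by simp
    have c3: "card B = card (B \<inter> A) + card (B - A)" using card_Int_Diff[OF finB] .
    have "X \<union> (B - A) \<subseteq> E - A" using X(2) B(2) by auto
    moreover have "X \<inter> (B - A) = {}" using B(2) by auto
    moreover have "finite (E - A)" using finE by simp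
    ultimately have "card (X \<union> (B - A)) \<le> card (E - A)" "finite X" "finite (B - A)"
      "X \<inter> (B - A) = {}"
      using card_mono[of "E - A" "X \<union> (B - A)"] finite_subset[of X "E - A"] X(2) finB by auto
    hence "card X + card (B - A) \<le> card (E - A)" using card_Un_disjoint by metis
    thus ?thesis using c1 c3 B(3) X(3) ceA by linarith
  qed
  ultimately show ?thesis by linarith
qed

lemma dual_rank0: "rk (dual_indep E I) E + rk I E = card E"
  using dual_rank[of "{}"] rk_card[of "{}"] by simp

end


context fixes E :: "'a set" and I and e :: 'a assumes M: "matroid E I" and eE: "e \<notin> E" begin

abbreviation "DD \<equiv> dual_indep E I"
abbreviation "FF \<equiv> free_ext_indep E (dual_indep E I) e"
abbreviation "NN \<equiv> free_coext_indep E I e"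

lemma F_sub: "FF \<subseteq> Pow (insert e E)"
  using D_sub[OF M] by (auto simp: free_ext_indep_def)
lemma finF: "finite FF"
  using F_sub finE[OF M] by (meson finite_Pow_iff finite_insert finite_subset)
lemma empF: "{} \<in> FF" using empD[OF M] by (simp add: free_ext_indep_def)

lemma rkF_C: assumes C: "C \<subseteq> E" shows "rk FF C = rk DD C"
proof -
  have "{X \<in> FF. X \<subseteq> C} = {X \<in> DD. X \<subseteq> C}"
    using C eE by (auto simp: free_ext_indep_def)
  thus ?thesis unfolding rk_def by simp
qed

lemma rkF_eC: assumes C: "C \<subseteq> E"
  shows "rk FF (insert e C) = rk DD E \<longleftrightarrow> rk DD E \<le> rk DD C + 1"
proof -
  let ?s = "rk DD E"
  have le_s: "rk DD C \<le> ?s" using rk_mono_gen[OF finD[OF M] empD[OF M] C] .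
  have up1: "rk FF (insert e C) \<le> rk DD C + 1"
  proof (rule rk_le_gen[OF finF empF])
    fix Y assume Y: "Y \<in> FF" "Y \<subseteq> insert e C"
    show "card Y \<le> rk DD C + 1"
    proof (cases "Y \<in> DD")
      case True
      hence "Y \<subseteq> C" using Y(2) D_sub[OF M] eE by blast
      thus ?thesis using rk_ub_gen[OF finD[OF M] True, of C] by simp
    next
      case False
      then obtain X where X: "Y = insert e X" "X \<in> DD" using Y(1) by (auto simp: free_ext_indep_def)
      have XE: "X \<subseteq> E" using X(2) D_sub[OF M] by blast
      hence "X \<subseteq> C" using Y(2) X(1) eE by blast
      hence "card X \<le> rk DD C" using rk_ub_gen[OF finD[OF M] X(2)] by simp
      moreover have "finite X" using XE finE[OF M] finite_subset by blast
      ultimately show ?thesis using X(1) by (simp add: card_insert_if)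
    qed
  qed
  have up2: "rk FF (insert e C) \<le> ?s"
  proof (rule rk_le_gen[OF finF empF])
    fix Y assume Y: "Y \<in> FF" "Y \<subseteq> insert e C"
    show "card Y \<le> ?s"
    proof (cases "Y \<in> DD")
      case True
      hence "Y \<subseteq> E" using D_sub[OF M] by blast
      thus ?thesis using rk_ub_gen[OF finD[OF M] True] by simp
    next
      case False
      then obtain X where X: "Y = insert e X" "X \<in> DD" "card X < mrank E DD"
        using Y(1) by (auto simp: free_ext_indep_def)
      have XE: "X \<subseteq> E" using X(2) D_sub[OF M] by blast
      have "finite X" using XE finE[OF M] finite_subset by blast
      thus ?thesis using X(1,3) by (simp add: card_insert_if mrank_def)
    qed
  qed
  obtain X where X: "X \<in> DD" "X \<subseteq> C" "card X = rk DD C"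
    using rk_ex_gen[OF finD[OF M] empD[OF M]] by blast
  have XF: "X \<in> FF" using X(1) by (simp add: free_ext_indep_def)
  have lo1: "rk DD C \<le> rk FF (insert e C)"
    using rk_ub_gen[OF finF XF, of "insert e C"] X by auto
  have lo2: "rk DD C + 1 \<le> rk FF (insert e C)" if lt: "rk DD C < ?s"
  proof -
    have XE: "X \<subseteq> E" using X(2) C by blast
    have "insert e X \<in> FF" using X lt by (auto simp: free_ext_indep_def mrank_def)
    moreover have "insert e X \<subseteq> insert e C" using X(2) by auto
    ultimately have "card (insert e X) \<le> rk FF (insert e C)" using rk_ub_gen[OF finF] by blast
    moreover have "finite X" using XE finE[OF M] finite_subset by blast
    moreover have "e \<notin> X" using XE eE by auto
    ultimately show ?thesis using X(3) by (simp add: card_insert_if)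
  qed
  show ?thesis
  proof
    assume "rk FF (insert e C) = ?s" thus "?s \<le> rk DD C + 1" using up1 by simp
  next
    assume a: "?s \<le> rk DD C + 1"
    show "rk FF (insert e C) = ?s"
    proof (cases "rk DD C < ?s")
      case True thus ?thesis using lo2 up2 a by simp
    next
      case False thus ?thesis using lo1 up2 le_s by simp
    qed
  qed
qed

lemma mrankF: "mrank (insert e E) FF = rk DD E"
  unfolding mrank_def using rkF_eC[of E] by simp

lemma N_iff: "Y \<in> NN \<longleftrightarrow> Y \<subseteq> insert e E \<and>
   (if e \<in> Y then Y - {e} \<in> I else card Y \<le> rk I Y + 1)"
proof -
  have base: "Y \<in> NN \<longleftrightarrow> Y \<subseteq> insert e E \<and> rk FF (insert e E - Y) = rk DD E"
    by (simp add: free_coext_indep_def dual_indep_def[of "insert e E"] mrankF)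
  have s: "rk DD E + rk I E = card E" using dual_rank0[OF M] .
  show ?thesis
  proof (cases "Y \<subseteq> insert e E")
    case False thus ?thesis using base by simp
  next
    case Ysub: True
    show ?thesis
    proof (cases "e \<in> Y")
      case True
      let ?A = "Y - {e}"
      have AE: "?A \<subseteq> E" using Ysub by auto
      have "insert e E - Y = E - ?A" using True eE by auto
      hence "rk FF (insert e E - Y) = rk DD (E - ?A)" using rkF_C[of "E - ?A"] by simp
      moreover have d: "rk DD (E - ?A) + card ?A + rk I E = card E + rk I ?A"
        using dual_rank[OF M AE] .
      moreover have "finite ?A" using AE finE[OF M] finite_subset by blast
      moreover have "rk I ?A \<le> card ?A" using rk_card[OF M] calculation(3) by blast
      ultimately have "rk FF (insert e E - Y) = rk DD E \<longleftrightarrow> rk I ?A = card ?A"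
        using s by linarith
      also have "\<dots> \<longleftrightarrow> ?A \<in> I"
        using indep_rk[OF M] rk_eq_card_indep[OF M] \<open>finite ?A\<close> by blast
      finally show ?thesis using base True Ysub by simp
    next
      case False
      have AE: "Y \<subseteq> E" using Ysub False by auto
      have "insert e E - Y = insert e (E - Y)" using False by auto
      hence "rk FF (insert e E - Y) = rk DD E \<longleftrightarrow> rk DD E \<le> rk DD (E - Y) + 1"
        using rkF_eC[of "E - Y"] by simp
      also have "\<dots> \<longleftrightarrow> card Y \<le> rk I Y + 1"
        using dual_rank[OF M AE] s by linarith
      finally show ?thesis using base False Ysub by simp
    qed
  qed
qed

lemma N_sub: "NN \<subseteq> Pow (insert e E)" using N_iff by auto
lemma finN: "finite NN"
  using N_sub finE[OF M] by (meson finite_Pow_iff finite_insert finite_subset)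
lemma empN: "{} \<in> NN" using N_iff by simp

lemma rkN_B: assumes B: "B \<subseteq> E"
  shows "rk NN B = rk I B + (if B \<in> I then 0 else 1)"
proof -
  have finB: "finite B" using B finE[OF M] finite_subset by blast
  obtain X where X: "X \<in> I" "X \<subseteq> B" "card X = rk I B" using rk_ex[OF M] by blast
  have finX: "finite X" using finB X(2) finite_subset by blast
  have XN: "X \<in> NN" using N_iff X B eE indep_rk[OF M X(1)] by auto
  have lo1: "rk I B \<le> rk NN B" using rk_ub_gen[OF finN XN X(2)] X(3) by simp
  have up1: "rk NN B \<le> rk I B + 1"
  proof (rule rk_le_gen[OF finN empN])
    fix Y assume Y: "Y \<in> NN" "Y \<subseteq> B"
    hence "e \<notin> Y" using B eE by auto
    hence "card Y \<le> rk I Y + 1" using Y N_iff by simp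
    thus "card Y \<le> rk I B + 1" using rk_mono[OF M Y(2)] by simp
  qed
  show ?thesis
  proof (cases "B \<in> I")
    case True
    have "rk NN B \<le> rk I B"
    proof (rule rk_le_gen[OF finN empN])
      fix Y assume Y: "Y \<in> NN" "Y \<subseteq> B"
      show "card Y \<le> rk I B" using card_mono[OF finB Y(2)] indep_rk[OF M True] by simp
    qed
    thus ?thesis using lo1 True by simp
  next
    case False
    hence "X \<noteq> B" using X(1) by auto
    then obtain b where b: "b \<in> B" "b \<notin> X" using X(2) by blast
    have "card X \<le> rk I (insert b X)" using rk_ub[OF M X(1)] by blast
    moreover have c: "card (insert b X) = card X + 1" using b finX by simp
    ultimately have "insert b X \<in> NN" using N_iff b B eE X(2) by auto
    hence "card (insert b X) \<le> rk NN B" using rk_ub_gen[OF finN] b X(2) by blast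
    thus ?thesis using c X(3) up1 False by simp
  qed
qed

lemma rkN_eB: assumes B: "B \<subseteq> E"
  shows "rk NN (insert e B) = rk I B + 1"
proof -
  have finB: "finite B" using B finE[OF M] finite_subset by blast
  obtain X where X: "X \<in> I" "X \<subseteq> B" "card X = rk I B" using rk_ex[OF M] by blast
  have finX: "finite X" using finB X(2) finite_subset by blast
  have eX: "e \<notin> X" using X(2) B eE by auto
  have "insert e X \<in> NN" using N_iff X B eX by auto
  hence "card (insert e X) \<le> rk NN (insert e B)" using rk_ub_gen[OF finN] X(2) by blast
  hence lo: "rk I B + 1 \<le> rk NN (insert e B)" using finX eX X(3) by simp
  have up: "rk NN (insert e B) \<le> rk I B + 1"
  proof (rule rk_le_gen[OF finN empN])
    fix Y assume Y: "Y \<in> NN" "Y \<subseteq> insert e B"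
    show "card Y \<le> rk I B + 1"
    proof (cases "e \<in> Y")
      case True
      hence YI: "Y - {e} \<in> I" using Y(1) N_iff[of Y] by simp
      have "Y - {e} \<subseteq> B" using Y(2) by auto
      hence "card (Y - {e}) \<le> rk I B" using rk_ub[OF M YI] by simp
      moreover have "finite Y" using Y(2) finB by (meson finite_insert finite_subset)
      ultimately show ?thesis using True by (simp add: card_Diff_singleton)
    next
      case False
      have "card Y \<le> rk I Y + 1" using N_iff[of Y] Y(1) False by simp
      moreover have "Y \<subseteq> B" using Y(2) False by blast
      ultimately
      show ?thesis using rk_mono[OF M, of Y B] by simp
    qed
  qed
  show ?thesis using lo up by simp
qed

lemma mrankN: "mrank (insert e E) NN = rk I E + 1"
  unfolding mrank_def using rkN_eB[of E] by simp

end


lemma sq_neg1: "(-1::int)^k * (-1)^k = 1"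
  by (metis power_add power_minus1_even mult_2)

lemma term_id: fixes x :: int
  shows "(-1)^(k+m+1) * ((-1)^k * ((-x)^(m+1) - (-x)^m)) = (1+x) * x^m"
proof -
  have p: "(-1::int)^(k+m+1) = (-1)^k * (-1)^(m+1)" by (simp add: power_add)
  have a: "(-1::int)^(k+m+1) * (-1)^k = (-1)^(m+1)"
  proof -
    have "(-1::int)^k * (-1)^(m+1) * (-1)^k = ((-1)^k * (-1)^k) * (-1)^(m+1)"
      by (simp only: mult_ac)
    also have "\<dots> = (-1)^(m+1)" by (simp only: sq_neg1 mult_1)
    finally show ?thesis unfolding p .
  qed
  have "(-1::int)^(k+m+1) * ((-1)^k * ((-x)^(m+1) - (-x)^m))
      = ((-1)^(k+m+1) * (-1)^k) * ((-x)^(m+1) - (-x)^m)" by (simp only: mult.assoc)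
  also have "\<dots> = (-1)^(m+1) * ((-x)^(m+1) - (-x)^m)" by (simp only: a)
  also have "\<dots> = (-1)^(m+1) * ((-1)^(m+1) * x^(m+1) - (-1)^m * x^m)"
    by (simp only: power_minus[of x])
  also have "\<dots> = ((-1)^(m+1) * (-1)^(m+1)) * x^(m+1) + ((-1)^m * (-1)^m) * x^m"
    by (simp add: algebra_simps)
  also have "\<dots> = (1+x) * x^m" by (simp only: sq_neg1) (simp add: algebra_simps)
  finally show ?thesis .
qed

theorem mainTheorem3:
  fixes E :: "'a set" and I :: "'a set set" and e :: 'a
  assumes "matroid E I" and "e \<notin> E"
  shows "smult ((-1) ^ (mrank E I + 1))
           (pcompose (char_poly (insert e E) (free_coext_indep E I e)) [:0, -1:])
         = [:1, 1:] * f_poly E I"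
proof -
  note M = assms(1) and eE = assms(2)
  let ?N = "free_coext_indep E I e"
  define r where "r = rk I E"
  have finE: "finite E" using finE[OF M] .
  define g where "g = (\<lambda>y::int. \<lambda>A. (-1::int) ^ card A * y ^ (r + 1 - rk ?N A))"
  have pchar: "poly (char_poly (insert e E) ?N) y = (\<Sum>A\<in>Pow (insert e E). g y A)" for y
    unfolding char_poly_def mrankN[OF M eE] g_def r_def
    by (simp add: poly_sum poly_monom)
  have split: "(\<Sum>A\<in>Pow (insert e E). g y A) = (\<Sum>B\<in>Pow E. g y B + g y (insert e B))" for y
  proof -
    have inj: "inj_on (insert e) (Pow E)"
    proof (rule inj_onI)
      fix B B' assume "B \<in> Pow E" "B' \<in> Pow E" "insert e B = insert e B'"
      thus "B = B'" using eE by (metis PowD insert_Diff_if insert_absorb subsetD Diff_insert_absorb)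
    qed
    have disj: "Pow E \<inter> insert e ` Pow E = {}" using eE by auto
    have "(\<Sum>A\<in>Pow (insert e E). g y A) = (\<Sum>A\<in>Pow E. g y A) + (\<Sum>A\<in>insert e ` Pow E. g y A)"
      unfolding Pow_insert using finE disj by (intro sum.union_disjoint) auto
    also have "(\<Sum>A\<in>insert e ` Pow E. g y A) = (\<Sum>B\<in>Pow E. g y (insert e B))"
      using sum.reindex[OF inj] by simp
    finally show ?thesis by (simp add: sum.distrib)
  qed
  have pair: "g y B + g y (insert e B) =
      (if B \<in> I then (-1)^card B * (y^(r+1-card B) - y^(r-card B)) else 0)"
    if B: "B \<in> Pow E" for y B
  proof -
    have BE: "B \<subseteq> E" using B by auto
    have finB: "finite B" using BE finE finite_subset by blast
    have eB: "e \<notin> B" using BE eE by auto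
    have c: "card (insert e B) = card B + 1" using finB eB by simp
    have r1: "rk ?N (insert e B) = rk I B + 1" using rkN_eB[OF M eE BE] .
    have r2: "rk ?N B = rk I B + (if B \<in> I then 0 else 1)" using rkN_B[OF M eE BE] .
    show ?thesis
    proof (cases "B \<in> I")
      case True
      hence "rk I B = card B" using indep_rk[OF M] by blast
      thus ?thesis unfolding g_def using True c r1 r2 by (simp add: algebra_simps)
    next
      case False
      thus ?thesis unfolding g_def using c r1 r2 by simp
    qed
  qed
  have psum: "poly (char_poly (insert e E) ?N) y =
      (\<Sum>B\<in>I. (-1)^card B * (y^(r+1-card B) - y^(r-card B)))" for y
  proof -
    have "poly (char_poly (insert e E) ?N) y =
      (\<Sum>B\<in>Pow E. (if B \<in> I then (-1)^card B * (y^(r+1-card B) - y^(r-card B)) else 0))"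
      unfolding pchar split by (intro sum.cong refl pair)
    also have "\<dots> = (\<Sum>B\<in>{B \<in> Pow E. B \<in> I}. (-1)^card B * (y^(r+1-card B) - y^(r-card B)))"
      using finE by (intro sum.inter_filter[symmetric]) simp
    also have "{B \<in> Pow E. B \<in> I} = I" using IPow[OF M] by auto
    finally show ?thesis .
  qed
  have "poly (smult ((-1) ^ (mrank E I + 1))
           (pcompose (char_poly (insert e E) ?N) [:0, -1:])) x
        = poly ([:1, 1:] * f_poly E I) x" for x
  proof -
    have "poly (smult ((-1) ^ (mrank E I + 1))
           (pcompose (char_poly (insert e E) ?N) [:0, -1:])) x
        = (-1)^(r+1) * (\<Sum>B\<in>I. (-1)^card B * ((-x)^(r+1-card B) - (-x)^(r-card B)))"
      by (simp add: poly_pcompose psum mrank_def r_def)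
    also have "\<dots> = (\<Sum>B\<in>I. (-1)^(r+1) * ((-1)^card B * ((-x)^(r+1-card B) - (-x)^(r-card B))))"
      by (simp add: sum_distrib_left)
    also have "\<dots> = (\<Sum>B\<in>I. (1 + x) * x^(r - card B))"
    proof (rule sum.cong[OF refl])
      fix B assume BI: "B \<in> I"
      have "card B \<le> r" unfolding r_def using rk_ub[OF M BI] IPow[OF M] BI by blast
      then obtain m where rm: "r = card B + m" using le_Suc_ex by blast
      have "r + 1 - card B = m + 1" "r - card B = m" using rm by auto
      thus "(-1)^(r+1) * ((-1)^card B * ((-x)^(r+1-card B) - (-x)^(r-card B)))
          = (1 + x) * x^(r - card B)"
        using term_id[of "card B" m x] rm by simp
    qed
    also have "\<dots> = (1 + x) * (\<Sum>B\<in>I. x^(r - card B))"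
      by (simp only: sum_distrib_left)
    also have "\<dots> = poly ([:1, 1:] * f_poly E I) x"
      by (simp add: f_poly_def poly_sum poly_monom mrank_def r_def distrib_right)
    finally show ?thesis .
  qed
  thus ?thesis using poly_eq_poly_eq_iff by blast
qed

end
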